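(* Under Assumption 1 and the partition setting of the context, the convex relaxation (R) and the Shor relaxation (S) are exact (i.e. $p^\star=v^\star=c^\star$) if the set $S_k$ is empty for every $k\in N_H$. In particular, exactness holds if for each $h\in H$ the numbers $c_{j_h}$ and $a_{ij_h}$, $i\in M$, are either all positive or all negative.
   Context: Let $N=\{1,\dots,n\}$ and $M=\{1,\dots,m\}$. Let ${\bf D}$ and ${\bf A}^i$ ($i\in M$) be real diagonal $n\times n$ matrices, ${\bf c},{\bf a}_i\in\mathbb{R}^n$ ($a_{ij}$ denotes the $j$-th entry of ${\bf a}_i$) and $b_i\in\mathbb{R}$. The diagonal QCQP is (P): $c^\star=\inf\{{\bf x}^\top{\bf D}{\bf x}+2{\bf c}^\top{\bf x} : {\bf x}^\top{\bf A}^i{\bf x}+2{\bf a}_i^\top{\bf x}\le b_i,\ i\in M\}$. Its Shor relaxation is (S): $v^\star=\inf\{{\bf D}\bullet{\bf X}+2{\bf c}^\top{\bf x} : {\bf A}^i\bullet{\bf X}+2{\bf a}_i^\top{\bf x}\le b_i\ (i\in M),\ {\bf X}-{\bf x}{\bf x}^\top\succeq {\bf O}\}$, where ${\bf P}\bullet{\bf Q}=\mathrm{trace}({\bf P}{\bf Q})$. The convex relaxation is (R): $p^\star=\inf\{\sum_{j\in N}D_{jj}z_j+2\sum_{j\in N}c_jx_j : \sum_{j\in N}A^i_{jj}z_j+2\sum_{j\in N}a_{ij}x_j\le b_i\ (i\in M),\ x_j^2\le z_j\ (j\in N)\}$. Assumption 1: (i) the feasible region of (P) is nonempty; (ii) there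 exists $\bar{\bf y}\ge 0$ with $\sum_{i\in M}\bar y_i{\bf A}^i\succ{\bf O}$; (iii) the feasible region of (S) has nonempty interior. For $k\in N$, $S_k$ is the set of $\boldsymbol{\mu}\in\mathbb{R}^m$ satisfying: $D_{kk}+\sum_{i\in M}\mu_iA^i_{kk}=0$; $c_k+\sum_{i\in M}\mu_ia_{ik}=0$; $D_{jj}+\sum_{i\in M}\mu_iA^i_{jj}\ge 0$ for all $j\in N$, $j\ne k$; $\mu_i\ge 0$ for all $i\in M$. Partition setting: $\{N_h\}_{h\in H}$ is a partition of $N$ such that for each $h\in H$ and $i\in M$ there is a number $\xi^{ih}$ with $A^i_{jj}=\xi^{ih}$ for all $j\in N_h$. For each $h\in H$, $d_h^*=\min_{j\in N_h}D_{jj}$ and it is assumed that this minimum is attained at a unique index $j_h\in N_h$. $N_H=\{j_h : h\in H\}$. *)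

theory Defs
  imports "HOL-Analysis.Analysis" "HOL-Library.Disjoint_Sets"
begin

(* Matrices are real^'n^'n, index set N is the finite type 'n, M is the finite type 'm. *)

definition diag_mat :: "real^'n^'n \<Rightarrow> bool" where
  "diag_mat P \<longleftrightarrow> (\<forall>i j. i \<noteq> j \<longrightarrow> P $ i $ j = 0)"

definition sym_mat :: "real^'n^'n \<Rightarrow> bool" where
  "sym_mat P \<longleftrightarrow> transpose P = P"

definition psd_mat :: "real^'n^'n \<Rightarrow> bool" where
  "psd_mat P \<longleftrightarrow> sym_mat P \<and> (\<forall>v. 0 \<le> v \<bullet> (P *v v))"

definition pd_mat :: "real^'n^'n \<Rightarrow> bool" where
  "pd_mat P \<longleftrightarrow> sym_mat P \<and> (\<forall>v. v \<noteq> 0 \<longrightarrow> 0 < v \<bullet> (P *v v))"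

definition frob :: "real^'n^'n \<Rightarrow> real^'n^'n \<Rightarrow> real" where
  "frob P Q = trace (P ** Q)"

definition outer :: "real^'n \<Rightarrow> real^'n \<Rightarrow> real^'n^'n" where
  "outer x y = (\<chi> i j. x $ i * y $ j)"

definition feasP :: "('m::finite \<Rightarrow> real^'n^'n) \<Rightarrow> ('m \<Rightarrow> real^'n) \<Rightarrow> ('m \<Rightarrow> real) \<Rightarrow> (real^'n) set" where
  "feasP A a b = {x. \<forall>i. x \<bullet> (A i *v x) + 2 * (a i \<bullet> x) \<le> b i}"

definition valP :: "real^'n^'n \<Rightarrow> real^'n \<Rightarrow> ('m::finite \<Rightarrow> real^'n^'n) \<Rightarrow> ('m \<Rightarrow> real^'n) \<Rightarrow> ('m \<Rightarrow> real) \<Rightarrow> ereal" where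
  "valP D c A a b = (INF x\<in>feasP A a b. ereal (x \<bullet> (D *v x) + 2 * (c \<bullet> x)))"

definition feasS :: "('m::finite \<Rightarrow> real^'n^'n) \<Rightarrow> ('m \<Rightarrow> real^'n) \<Rightarrow> ('m \<Rightarrow> real) \<Rightarrow> ((real^'n^'n) \<times> (real^'n)) set" where
  "feasS A a b = {(X, x). sym_mat X \<and> (\<forall>i. frob (A i) X + 2 * (a i \<bullet> x) \<le> b i)
                          \<and> psd_mat (X - outer x x)}"

definition valS :: "real^'n^'n \<Rightarrow> real^'n \<Rightarrow> ('m::finite \<Rightarrow> real^'n^'n) \<Rightarrow> ('m \<Rightarrow> real^'n) \<Rightarrow> ('m \<Rightarrow> real) \<Rightarrow> ereal" where
  "valS D c A a b = (INF p\<in>feasS A a b. ereal (frob D (fst p) + 2 * (c \<bullet> snd p)))"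

definition feasR :: "('m::finite \<Rightarrow> real^'n^'n) \<Rightarrow> ('m \<Rightarrow> real^'n) \<Rightarrow> ('m \<Rightarrow> real) \<Rightarrow> ((real^'n) \<times> (real^'n)) set" where
  "feasR A a b = {(x, z). (\<forall>i. (\<Sum>j\<in>UNIV. A i $ j $ j * z $ j) + 2 * (\<Sum>j\<in>UNIV. a i $ j * x $ j) \<le> b i)
                          \<and> (\<forall>j. (x $ j)\<^sup>2 \<le> z $ j)}"

definition valR :: "real^'n^'n \<Rightarrow> real^'n \<Rightarrow> ('m::finite \<Rightarrow> real^'n^'n) \<Rightarrow> ('m \<Rightarrow> real^'n) \<Rightarrow> ('m \<Rightarrow> real) \<Rightarrow> ereal" where
  "valR D c A a b = (INF p\<in>feasR A a b.
      ereal ((\<Sum>j\<in>UNIV. D $ j $ j * snd p $ j) + 2 * (\<Sum>j\<in>UNIV. c $ j * fst p $ j)))"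

definition Sk :: "real^'n^'n \<Rightarrow> real^'n \<Rightarrow> ('m::finite \<Rightarrow> real^'n^'n) \<Rightarrow> ('m \<Rightarrow> real^'n) \<Rightarrow> 'n \<Rightarrow> ('m \<Rightarrow> real) set" where
  "Sk D c A a k = {\<mu>. D $ k $ k + (\<Sum>i\<in>UNIV. \<mu> i * A i $ k $ k) = 0
                     \<and> c $ k + (\<Sum>i\<in>UNIV. \<mu> i * a i $ k) = 0
                     \<and> (\<forall>j. j \<noteq> k \<longrightarrow> D $ j $ j + (\<Sum>i\<in>UNIV. \<mu> i * A i $ j $ j) \<ge> 0)
                     \<and> (\<forall>i. \<mu> i \<ge> 0)}"

definition unique_argmin :: "real^'n^'n \<Rightarrow> 'n set \<Rightarrow> 'n \<Rightarrow> bool" where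
  "unique_argmin D Nh j \<longleftrightarrow> j \<in> Nh \<and> (\<forall>j'\<in>Nh. j' \<noteq> j \<longrightarrow> D $ j $ j < D $ j' $ j')"

(* N_H = { j_h : h \<in> H } where the blocks of the partition are the elements of Ps *)
definition NH :: "real^'n^'n \<Rightarrow> 'n set set \<Rightarrow> 'n set" where
  "NH D Ps = {j. \<exists>Nh\<in>Ps. unique_argmin D Nh j}"

end

theory Submission
  imports Defs
begin


lemma frob_diag:
  assumes "diag_mat P"
  shows "frob P X = (\<Sum>j\<in>UNIV. P$j$j * X$j$j)"
proof -
  have "frob P X = (\<Sum>i\<in>UNIV. \<Sum>k\<in>UNIV. P$i$k * X$k$i)"
    by (simp add: frob_def trace_def matrix_matrix_mult_def)
  also have "\<dots> = (\<Sum>i\<in>UNIV. P$i$i * X$i$i)"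
  proof (rule sum.cong[OF refl])
    fix i
    have "(\<Sum>k\<in>UNIV. P$i$k * X$k$i) = (\<Sum>k\<in>UNIV. if k = i then P$i$i * X$i$i else 0)"
      using assms by (intro sum.cong) (auto simp: diag_mat_def)
    then show "(\<Sum>k\<in>UNIV. P$i$k * X$k$i) = P$i$i * X$i$i" by simp
  qed
  finally show ?thesis .
qed

lemma quad_diag:
  assumes "diag_mat P"
  shows "x \<bullet> (P *v x) = (\<Sum>j\<in>UNIV. P$j$j * (x$j)\<^sup>2)"
proof -
  have "x \<bullet> (P *v x) = (\<Sum>i\<in>UNIV. x$i * (\<Sum>k\<in>UNIV. P$i$k * x$k))"
    by (simp add: inner_vec_def matrix_vector_mult_def)
  also have "\<dots> = (\<Sum>i\<in>UNIV. P$i$i * (x$i)\<^sup>2)"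
  proof (rule sum.cong[OF refl])
    fix i
    have "(\<Sum>k\<in>UNIV. P$i$k * x$k) = (\<Sum>k\<in>UNIV. if k = i then P$i$i * x$i else 0)"
      using assms by (intro sum.cong) (auto simp: diag_mat_def)
    then show "x$i * (\<Sum>k\<in>UNIV. P$i$k * x$k) = P$i$i * (x$i)\<^sup>2" by (simp add: power2_eq_square)
  qed
  finally show ?thesis .
qed

lemma inner_sum: "(c::real^'n) \<bullet> x = (\<Sum>j\<in>UNIV. c$j * x$j)"
  by (simp add: inner_vec_def)

lemma mv_axis: "(P *v axis j 1) $ i = P$i$j"
proof -
  have "(\<Sum>k\<in>UNIV. P$i$k * (if k = j then 1 else 0)) = (\<Sum>k\<in>UNIV. if k = j then P$i$j else 0)"
    by (intro sum.cong) auto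
  then show ?thesis by (simp add: matrix_vector_mult_def axis_def)
qed

lemma quad_axis: "axis j 1 \<bullet> (P *v axis j 1) = P$j$j"
  by (simp add: inner_axis' mv_axis)

lemma psd_diag: "psd_mat P \<Longrightarrow> 0 \<le> P$j$j"
  unfolding psd_mat_def using quad_axis by metis

lemma outer_sym: "sym_mat (outer x x)"
  by (simp add: sym_mat_def outer_def transpose_def vec_eq_iff mult.commute)

lemma psd_zero: "psd_mat (0::real^'n^'n)"
  by (simp add: psd_mat_def sym_mat_def transpose_def vec_eq_iff)

lemma outer_diag: "outer x x $ j $ j = (x$j)\<^sup>2"
  by (simp add: outer_def power2_eq_square)



lemma lagrange:
  fixes f :: "'w::real_vector \<Rightarrow> real" and h :: "'m::finite \<Rightarrow> 'w \<Rightarrow> real"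
  assumes C: "convex C"
    and faff: "\<And>x y u v. u + v = 1 \<Longrightarrow> f (u *\<^sub>R x + v *\<^sub>R y) = u * f x + v * f y"
    and haff: "\<And>i x y u v. u + v = 1 \<Longrightarrow> h i (u *\<^sub>R x + v *\<^sub>R y) = u * h i x + v * h i y"
    and opt: "\<And>w. w \<in> C \<Longrightarrow> (\<forall>i. h i w \<le> 0) \<Longrightarrow> p \<le> f w"
    and wb: "wb \<in> C" "\<And>i. h i wb < 0"
  shows "\<exists>\<mu>. (\<forall>i. 0 \<le> \<mu> i) \<and> (\<forall>w\<in>C. p \<le> f w + (\<Sum>i\<in>UNIV. \<mu> i * h i w))"
proof -
  define S where "S = {(u::real^'m, t::real). \<exists>w\<in>C. (\<forall>i. h i w \<le> u$i) \<and> f w - p < t}"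
  have convS: "convex S"
    unfolding convex_def
  proof (intro ballI allI impI)
    fix s1 s2 and \<alpha> \<beta> :: real
    assume s1: "s1 \<in> S" and s2: "s2 \<in> S" and a0: "0 \<le> \<alpha>" and b0: "0 \<le> \<beta>" and ab: "\<alpha> + \<beta> = 1"
    obtain u1 t1 w1 where 1: "s1 = (u1,t1)" "w1 \<in> C" "\<forall>i. h i w1 \<le> u1$i" "f w1 - p < t1"
      using s1 unfolding S_def by auto
    obtain u2 t2 w2 where 2: "s2 = (u2,t2)" "w2 \<in> C" "\<forall>i. h i w2 \<le> u2$i" "f w2 - p < t2"
      using s2 unfolding S_def by auto
    have wC: "\<alpha> *\<^sub>R w1 + \<beta> *\<^sub>R w2 \<in> C"
      by (rule convexD[OF C 1(2) 2(2) a0 b0 ab])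
    have hh: "h i (\<alpha> *\<^sub>R w1 + \<beta> *\<^sub>R w2) \<le> (\<alpha> *\<^sub>R u1 + \<beta> *\<^sub>R u2)$i" for i
    proof -
      have "h i (\<alpha> *\<^sub>R w1 + \<beta> *\<^sub>R w2) = \<alpha> * h i w1 + \<beta> * h i w2" by (rule haff[OF ab])
      also have "\<dots> \<le> \<alpha> * u1$i + \<beta> * u2$i"
        using 1 2 a0 b0 by (intro add_mono mult_left_mono) auto
      finally show ?thesis by simp
    qed
    have ff: "f (\<alpha> *\<^sub>R w1 + \<beta> *\<^sub>R w2) - p < \<alpha> * t1 + \<beta> * t2"
    proof -
      have e1: "f (\<alpha> *\<^sub>R w1 + \<beta> *\<^sub>R w2) = \<alpha> * f w1 + \<beta> * f w2" by (rule faff[OF ab])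
      have e2: "\<alpha> * p + \<beta> * p = p" using ab by (simp add: distrib_right[symmetric])
      have "f (\<alpha> *\<^sub>R w1 + \<beta> *\<^sub>R w2) - p = \<alpha> * (f w1 - p) + \<beta> * (f w2 - p)"
        using e1 e2 by (simp add: right_diff_distrib)
      also have "\<dots> < \<alpha> * t1 + \<beta> * t2"
      proof (cases "\<alpha> = 0")
        case True then show ?thesis using ab 2 by simp
      next
        case False then have "\<alpha> > 0" using a0 by simp
        then have "\<alpha> * (f w1 - p) < \<alpha> * t1" using 1 by simp
        moreover have "\<beta> * (f w2 - p) \<le> \<beta> * t2" using 2 b0 by (intro mult_left_mono) auto
        ultimately show ?thesis by linarith
      qed
      finally show ?thesis .
    qed
    show "\<alpha> *\<^sub>R s1 + \<beta> *\<^sub>R s2 \<in> S"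
      unfolding S_def using 1 2 wC hh ff by auto
  qed
  have zS: "0 \<notin> S"
  proof
    assume "0 \<in> S"
    then obtain w where "w \<in> C" "\<forall>i. h i w \<le> 0" "f w - p < 0" unfolding S_def by (auto simp: zero_prod_def)
    with opt show False by fastforce
  qed
  obtain a where a0: "a \<noteq> 0" and asep: "\<forall>s\<in>S. 0 \<le> inner a s"
    using separating_hyperplane_set_0[OF convS zS] by blast
  define l where "l = fst a"
  define l0 where "l0 = snd a"
  have sep: "0 \<le> l \<bullet> u + l0 * t" if "w \<in> C" "\<And>i. h i w \<le> u$i" "f w - p < t" for w u t
  proof -
    have "(u,t) \<in> S" unfolding S_def using that by auto
    then have "0 \<le> inner a (u,t)" using asep by blast
    moreover have "a = (l, l0)" by (simp add: l_def l0_def)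
    ultimately show ?thesis by simp
  qed
  define hb where "hb = (\<chi> i. h i wb)"
  define tb where "tb = f wb - p + 1"
  have l_nn: "0 \<le> l$i" for i
  proof (rule ccontr)
    assume "\<not> 0 \<le> l$i"
    then have neg: "l$i < 0" by simp
    define T where "T = (\<bar>l \<bullet> hb\<bar> + \<bar>l0 * tb\<bar> + 1) / (- l$i)"
    have T0: "T \<ge> 0" unfolding T_def by (rule divide_nonneg_pos) (use neg in auto)
    have "0 \<le> l \<bullet> (hb + T *\<^sub>R axis i 1) + l0 * tb"
      using wb T0 by (intro sep[of wb]) (auto simp: hb_def tb_def axis_def)
    also have "l \<bullet> (hb + T *\<^sub>R axis i 1) = l \<bullet> hb + T * l$i"
      by (simp add: inner_add_right inner_axis)
    also have "T * l$i = - (\<bar>l \<bullet> hb\<bar> + \<bar>l0 * tb\<bar> + 1)"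
      using neg unfolding T_def by (simp add: field_simps)
    finally show False by linarith
  qed
  have l0_nn: "0 \<le> l0"
  proof (rule ccontr)
    assume "\<not> 0 \<le> l0"
    then have neg: "l0 < 0" by simp
    define T where "T = (\<bar>l \<bullet> hb\<bar> + \<bar>l0 * tb\<bar> + 1) / (- l0)"
    have T0: "T \<ge> 0" unfolding T_def by (rule divide_nonneg_pos) (use neg in auto)
    have "0 \<le> l \<bullet> hb + l0 * (tb + T)"
      using wb T0 by (intro sep[of wb]) (auto simp: hb_def tb_def)
    also have "l0 * (tb + T) = l0 * tb - (\<bar>l \<bullet> hb\<bar> + \<bar>l0 * tb\<bar> + 1)"
      using neg unfolding T_def by (simp add: field_simps)
    finally show False by linarith
  qed
  have key: "0 \<le> l \<bullet> (\<chi> i. h i w) + l0 * (f w - p)" if w: "w \<in> C" for w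
  proof (rule ccontr)
    define Q where "Q = l \<bullet> (\<chi> i. h i w) + l0 * (f w - p)"
    assume "\<not> 0 \<le> l \<bullet> (\<chi> i. h i w) + l0 * (f w - p)"
    then have Q: "Q < 0" by (simp add: Q_def)
    define e where "e = - Q / (2 * (l0 + 1))"
    have e0: "e > 0" unfolding e_def by (rule divide_pos_pos) (use Q l0_nn in auto)
    have "0 \<le> l \<bullet> (\<chi> i. h i w) + l0 * (f w - p + e)"
      using w e0 by (intro sep[of w]) auto
    also have "\<dots> = Q + l0 * e" by (simp add: Q_def algebra_simps)
    also have "l0 * e \<le> (l0 + 1) * e" using e0 by simp
    also have "(l0 + 1) * e = - Q / 2" using l0_nn by (simp add: e_def field_simps)
    finally show False using Q by linarith
  qed
  have l0_pos: "0 < l0"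
  proof (rule ccontr)
    assume "\<not> 0 < l0"
    then have z: "l0 = 0" using l0_nn by simp
    then have "l \<noteq> 0" using a0 by (simp add: l_def l0_def prod_eq_iff)
    then obtain i where li: "l$i \<noteq> 0" by (auto simp: vec_eq_iff)
    then have lip: "l$i > 0" using l_nn[of i] by simp
    have "0 \<le> l \<bullet> hb" using key[OF wb(1)] z by (simp add: hb_def)
    also have "l \<bullet> hb = (\<Sum>j\<in>UNIV. l$j * h j wb)" by (simp add: inner_vec_def hb_def)
    also have "\<dots> < (\<Sum>j\<in>UNIV. (0::real))"
    proof -
      have a1: "\<forall>j\<in>UNIV. l $ j * h j wb \<le> 0" using l_nn wb(2) by (simp add: mult_nonneg_nonpos less_imp_le)
      have a2: "\<exists>j\<in>UNIV. l $ j * h j wb < 0" using lip wb(2)[of i] by (auto intro: mult_pos_neg)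
      show ?thesis using sum_strict_mono_ex1[of UNIV "\<lambda>j. l $ j * h j wb" "\<lambda>_. 0"] a1 a2 by simp
    qed
    finally show False by simp
  qed
  show ?thesis
  proof (intro exI[of _ "\<lambda>i. l$i / l0"] conjI allI ballI)
    fix i show "0 \<le> l$i / l0" using l_nn l0_pos by simp
  next
    fix w assume w: "w \<in> C"
    have "0 \<le> (\<Sum>i\<in>UNIV. l$i * h i w) + l0 * (f w - p)"
      using key[OF w] by (simp add: inner_vec_def)
    then have "0 \<le> ((\<Sum>i\<in>UNIV. l$i * h i w) + l0 * (f w - p)) / l0" using l0_pos by simp
    also have "\<dots> = (\<Sum>i\<in>UNIV. l$i / l0 * h i w) + (f w - p)"
      using l0_pos by (simp add: add_divide_distrib sum_divide_distrib)
    finally show "p \<le> f w + (\<Sum>i\<in>UNIV. l$i / l0 * h i w)" by simp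
  qed
qed



definition gR :: "('m \<Rightarrow> real^'n^'n) \<Rightarrow> ('m \<Rightarrow> real^'n) \<Rightarrow> 'm \<Rightarrow> (real^'n) \<times> (real^'n) \<Rightarrow> real" where
  "gR A a i w = (\<Sum>j\<in>UNIV. A i $ j $ j * snd w $ j) + 2 * (\<Sum>j\<in>UNIV. a i $ j * fst w $ j)"

definition fR :: "real^'n^'n \<Rightarrow> real^'n \<Rightarrow> (real^'n) \<times> (real^'n) \<Rightarrow> real" where
  "fR D c w = (\<Sum>j\<in>UNIV. D $ j $ j * snd w $ j) + 2 * (\<Sum>j\<in>UNIV. c $ j * fst w $ j)"

definition Cset :: "((real^'n) \<times> (real^'n)) set" where
  "Cset = {w. \<forall>j. (fst w $ j)\<^sup>2 \<le> snd w $ j}"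

lemma feasR_eq: "feasR A a b = {w\<in>Cset. \<forall>i. gR A a i w \<le> b i}"
  by (auto simp: feasR_def gR_def Cset_def)

lemma valR_eq: "valR D c A a b = (INF w\<in>feasR A a b. ereal (fR D c w))"
  by (simp add: valR_def fR_def)

lemma lin_form:
  "(\<Sum>j\<in>UNIV. P j * snd (u *\<^sub>R x + v *\<^sub>R y) $ j) + 2 * (\<Sum>j\<in>UNIV. Q j * fst (u *\<^sub>R x + v *\<^sub>R y) $ j)
   = u * ((\<Sum>j\<in>UNIV. P j * snd x $ j) + 2 * (\<Sum>j\<in>UNIV. Q j * fst x $ j))
   + v * ((\<Sum>j\<in>UNIV. P j * snd y $ j) + 2 * (\<Sum>j\<in>UNIV. Q j * fst y $ j))"
  by (simp add: algebra_simps sum.distrib sum_distrib_left)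

lemma gR_aff: "gR A a i (u *\<^sub>R x + v *\<^sub>R y) = u * gR A a i x + v * gR A a i y"
  unfolding gR_def by (rule lin_form)

lemma fR_aff: "fR D c (u *\<^sub>R x + v *\<^sub>R y) = u * fR D c x + v * fR D c y"
  unfolding fR_def by (rule lin_form)

lemma sq_comb:
  fixes x1 x2 u v :: real
  assumes "u \<ge> 0" "v \<ge> 0" "u + v = 1"
  shows "(u * x1 + v * x2)\<^sup>2 \<le> u * x1\<^sup>2 + v * x2\<^sup>2"
proof -
  have "u * x1\<^sup>2 + v * x2\<^sup>2 - (u * x1 + v * x2)\<^sup>2 = u * v * (x1 - x2)\<^sup>2"
  proof -
    have e: "1 - u = v" "1 - v = u" using assms by auto
    have "u * x1\<^sup>2 + v * x2\<^sup>2 - (u * x1 + v * x2)\<^sup>2 = u * (1-u) * x1\<^sup>2 + v * (1-v) * x2\<^sup>2 - 2 * u * v * x1 * x2"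
      by (simp add: power2_eq_square algebra_simps)
    also have "\<dots> = u * v * (x1 - x2)\<^sup>2" unfolding e by (simp add: power2_eq_square algebra_simps)
    finally show ?thesis .
  qed
  moreover have "u * v * (x1 - x2)\<^sup>2 \<ge> 0" using assms by simp
  ultimately show ?thesis by linarith
qed

lemma convex_Cset: "convex Cset"
  unfolding convex_def Cset_def
proof (intro ballI allI impI, simp only: mem_Collect_eq)
  fix w1 w2 :: "(real^'n) \<times> (real^'n)" and u v :: real
  assume 1: "\<forall>j. (fst w1 $ j)\<^sup>2 \<le> snd w1 $ j" and 2: "\<forall>j. (fst w2 $ j)\<^sup>2 \<le> snd w2 $ j"
    and u: "0 \<le> u" and v: "0 \<le> v" and uv: "u + v = 1"
  show "\<forall>j. (fst (u *\<^sub>R w1 + v *\<^sub>R w2) $ j)\<^sup>2 \<le> snd (u *\<^sub>R w1 + v *\<^sub>R w2) $ j"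
  proof
    fix j
    have "(fst (u *\<^sub>R w1 + v *\<^sub>R w2) $ j)\<^sup>2 = (u * fst w1 $ j + v * fst w2 $ j)\<^sup>2" by simp
    also have "\<dots> \<le> u * (fst w1 $ j)\<^sup>2 + v * (fst w2 $ j)\<^sup>2" by (rule sq_comb[OF u v uv])
    also have "\<dots> \<le> u * snd w1 $ j + v * snd w2 $ j"
      using 1 2 u v by (intro add_mono mult_left_mono) auto
    finally show "(fst (u *\<^sub>R w1 + v *\<^sub>R w2) $ j)\<^sup>2 \<le> snd (u *\<^sub>R w1 + v *\<^sub>R w2) $ j" by simp
  qed
qed

lemma sum_axis: "(\<Sum>j\<in>UNIV. f j * axis k (1::real) $ j) = (f k :: real)"
proof -
  have "(\<Sum>j\<in>UNIV. f j * axis k (1::real) $ j) = (\<Sum>j\<in>UNIV. if j = k then f k else 0)"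
    by (intro sum.cong) (auto simp: axis_def)
  then show ?thesis by simp
qed

lemma Phi_z: "(\<Sum>j\<in>UNIV. d j * (z + t *\<^sub>R axis k 1) $ j + 2 * (e j * x $ j))
   = (\<Sum>j\<in>UNIV. d j * z $ j + 2 * (e j * x $ j)) + t * (d k :: real)"
proof -
  have "(\<Sum>j\<in>UNIV. d j * (z + t *\<^sub>R axis k 1) $ j + 2 * (e j * x $ j))
     = (\<Sum>j\<in>UNIV. d j * z $ j + 2 * (e j * x $ j)) + t * (\<Sum>j\<in>UNIV. d j * axis k 1 $ j)"
    by (simp add: algebra_simps sum.distrib sum_distrib_left)
  then show ?thesis by (simp add: sum_axis)
qed

lemma Phi_x: "(\<Sum>j\<in>UNIV. d j * z $ j + 2 * (e j * (x + t *\<^sub>R axis k 1) $ j))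
   = (\<Sum>j\<in>UNIV. d j * z $ j + 2 * (e j * x $ j)) + 2 * t * (e k :: real)"
proof -
  have "(\<Sum>j\<in>UNIV. d j * z $ j + 2 * (e j * (x + t *\<^sub>R axis k 1) $ j))
     = (\<Sum>j\<in>UNIV. d j * z $ j + 2 * (e j * x $ j)) + 2 * t * (\<Sum>j\<in>UNIV. e j * axis k 1 $ j)"
    by (simp add: algebra_simps sum.distrib sum_distrib_left)
  then show ?thesis by (simp add: sum_axis)
qed

lemma sep_min:
  fixes d e :: "'n::finite \<Rightarrow> real" and xs zs :: "real^'n"
  assumes inC: "\<forall>j. (xs$j)\<^sup>2 \<le> zs$j"
    and min: "\<And>x z. (\<forall>j. (x$j)\<^sup>2 \<le> z$j) \<Longrightarrow>
       (\<Sum>j\<in>UNIV. d j * zs $ j + 2 * (e j * xs $ j)) \<le> (\<Sum>j\<in>UNIV. d j * z $ j + 2 * (e j * x $ j))"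
  shows "0 \<le> d j" and "(xs$k)\<^sup>2 < zs$k \<Longrightarrow> d k = 0 \<and> e k = 0"
proof -
  let ?P = "\<lambda>x z. (\<Sum>j\<in>UNIV. d j * z $ j + 2 * (e j * x $ j))"
  have "(\<forall>l. (xs$l)\<^sup>2 \<le> (zs + 1 *\<^sub>R axis j 1)$l)"
    using inC by (auto simp: axis_def) (smt (verit) inC)
  from min[OF this] have "?P xs zs \<le> ?P xs zs + 1 * d j" by (simp only: Phi_z)
  then show "0 \<le> d j" by simp
next
  let ?P = "\<lambda>x z. (\<Sum>j\<in>UNIV. d j * z $ j + 2 * (e j * x $ j))"
  assume lt: "(xs$k)\<^sup>2 < zs$k"
  define s where "s = zs$k - (xs$k)\<^sup>2"
  have s0: "s > 0" using lt by (simp add: s_def)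
  have "(\<forall>l. (xs$l)\<^sup>2 \<le> (zs + (-s) *\<^sub>R axis k 1)$l)"
    using inC by (auto simp: axis_def s_def)
  from min[OF this] have "?P xs zs \<le> ?P xs zs + (-s) * d k" by (simp only: Phi_z)
  then have "s * d k \<le> 0" by simp
  then have dk0: "d k \<le> 0" using s0 by (simp add: mult_le_0_iff)
  have dknn: "0 \<le> d k"
  proof -
    have "(\<forall>l. (xs$l)\<^sup>2 \<le> (zs + 1 *\<^sub>R axis k 1)$l)"
      using inC by (auto simp: axis_def) (smt (verit) inC)
    from min[OF this] have "?P xs zs \<le> ?P xs zs + 1 * d k" by (simp only: Phi_z)
    then show ?thesis by simp
  qed
  have dk: "d k = 0" using dk0 dknn by simp
  define x' where "x' = xs + (- e k) *\<^sub>R axis k 1"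
  define z' where "z' = zs + ((x'$k)\<^sup>2) *\<^sub>R axis k 1"
  have zs0: "0 \<le> zs $ l" for l using inC[rule_format, of l] by (smt (verit) zero_le_power2)
  have "(\<forall>l. (x'$l)\<^sup>2 \<le> z'$l)"
  proof
    fix l show "(x'$l)\<^sup>2 \<le> z'$l"
    proof (cases "l = k")
      case True then show ?thesis using zs0[of k] by (simp add: z'_def)
    next
      case False then show ?thesis using inC by (simp add: x'_def z'_def axis_def)
    qed
  qed
  from min[OF this] have "?P xs zs \<le> ?P x' z'" .
  also have "?P x' z' = ?P x' zs + (x'$k)\<^sup>2 * d k" unfolding z'_def by (rule Phi_z)
  also have "?P x' zs = ?P xs zs + 2 * (- e k) * e k" unfolding x'_def by (rule Phi_x)
  finally have "0 \<le> - 2 * (e k * e k)" using dk by simp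
  then have "e k * e k \<le> 0" by simp
  then have "e k = 0" using mult_le_0_iff[of "e k" "e k"] by auto
  with dk show "d k = 0 \<and> e k = 0" by simp
qed



lemma swap_form:
  "(\<Sum>i\<in>UNIV. y i * ((\<Sum>j\<in>UNIV. P i j * z$j) + 2 * (\<Sum>j\<in>UNIV. Q i j * x$j)))
   = (\<Sum>j\<in>UNIV. (\<Sum>i\<in>UNIV. y i * P i j) * z$j + 2 * ((\<Sum>i\<in>UNIV. y i * Q i j) * x$j :: real))"
proof -
  have "(\<Sum>i\<in>UNIV. y i * ((\<Sum>j\<in>UNIV. P i j * z$j) + 2 * (\<Sum>j\<in>UNIV. Q i j * x$j)))
      = (\<Sum>i\<in>UNIV. \<Sum>j\<in>UNIV. y i * P i j * z$j + 2 * (y i * Q i j * x$j))"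
    by (simp add: distrib_left sum_distrib_left sum.distrib mult.assoc mult.left_commute)
  also have "\<dots> = (\<Sum>j\<in>UNIV. \<Sum>i\<in>UNIV. y i * P i j * z$j + 2 * (y i * Q i j * x$j))"
    by (rule sum.swap)
  also have "\<dots> = (\<Sum>j\<in>UNIV. (\<Sum>i\<in>UNIV. y i * P i j) * z$j + 2 * ((\<Sum>i\<in>UNIV. y i * Q i j) * x$j))"
    by (simp add: sum_distrib_right sum_distrib_left sum.distrib)
  finally show ?thesis .
qed

lemma quad_lb:
  fixes w z x v :: real
  assumes "w > 0" "x\<^sup>2 \<le> z"
  shows "w * z / 2 - 2 * v\<^sup>2 / w \<le> w * z + 2 * (v * x)"
proof -
  have eq: "w * z + 2 * (v * x) - (w * z / 2 - 2 * v\<^sup>2 / w) = (w\<^sup>2 * (z - x\<^sup>2) + (w * x + 2 * v)\<^sup>2) / (2 * w)"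
    using assms(1) by (simp add: field_simps power2_eq_square)
  have "0 \<le> (w\<^sup>2 * (z - x\<^sup>2) + (w * x + 2 * v)\<^sup>2) / (2 * w)"
    using assms by (intro divide_nonneg_pos add_nonneg_nonneg mult_nonneg_nonneg) auto
  then show ?thesis using eq by linarith
qed

lemma abs_le_sq: "\<bar>t::real\<bar> \<le> 1 + t\<^sup>2"
proof -
  have "0 \<le> (\<bar>t\<bar> - 1)\<^sup>2" by simp
  moreover have "(\<bar>t\<bar> - 1)\<^sup>2 = t\<^sup>2 - 2 * \<bar>t\<bar> + 1"
    by (simp add: power2_eq_square algebra_simps)
  moreover have "0 \<le> t\<^sup>2" by simp
  ultimately show ?thesis by linarith
qed

lemma pd_diag_pos: "pd_mat P \<Longrightarrow> 0 < P$j$j"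
  unfolding pd_mat_def using quad_axis by (metis axis_eq_0_iff zero_neq_one)

lemma feasR_compact:
  fixes A :: "'m::finite \<Rightarrow> real^'n::finite^'n"
  assumes A1_ii: "\<exists>y. (\<forall>i. y i \<ge> 0) \<and> pd_mat (\<Sum>i\<in>UNIV. y i *\<^sub>R A i)"
  shows "compact (feasR A a b)"
proof -
  obtain y where y0: "\<forall>i. y i \<ge> 0" and pd: "pd_mat (\<Sum>i\<in>UNIV. y i *\<^sub>R A i)" using A1_ii by blast
  define wj where "wj j = (\<Sum>i\<in>UNIV. y i * A i $ j $ j)" for j
  define vj where "vj j = (\<Sum>i\<in>UNIV. y i * a i $ j)" for j
  define B where "B = (\<Sum>i\<in>UNIV. y i * b i)"
  define K where "K = B + (\<Sum>j\<in>UNIV. 2 * (vj j)\<^sup>2 / wj j)"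
  define R where "R = 1 + (\<Sum>j\<in>UNIV. \<bar>2 * K / wj j\<bar>)"
  have wpos: "wj j > 0" for j
    using pd_diag_pos[OF pd, of j] by (simp add: wj_def)
  have bnd: "0 \<le> snd w $ j \<and> snd w $ j \<le> R \<and> \<bar>fst w $ j\<bar> \<le> R" if w: "w \<in> feasR A a b" for w j
  proof -
    have wC: "\<forall>j. (fst w $ j)\<^sup>2 \<le> snd w $ j" and wg: "\<forall>i. gR A a i w \<le> b i"
      using w by (auto simp: feasR_eq Cset_def)
    have z0: "0 \<le> snd w $ l" for l using wC[rule_format, of l] by (smt (verit) zero_le_power2)
    have "(\<Sum>i\<in>UNIV. y i * gR A a i w) \<le> B"
      unfolding B_def using wg y0 by (intro sum_mono mult_left_mono) auto
    moreover have "(\<Sum>i\<in>UNIV. y i * gR A a i w) = (\<Sum>j\<in>UNIV. wj j * snd w $ j + 2 * (vj j * fst w $ j))"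
      unfolding gR_def wj_def vj_def by (rule swap_form)
    moreover have "(\<Sum>j\<in>UNIV. wj j * snd w $ j / 2 - 2 * (vj j)\<^sup>2 / wj j) \<le> (\<Sum>j\<in>UNIV. wj j * snd w $ j + 2 * (vj j * fst w $ j))"
      using wpos wC by (intro sum_mono quad_lb) auto
    ultimately have "(\<Sum>j\<in>UNIV. wj j * snd w $ j / 2 - 2 * (vj j)\<^sup>2 / wj j) \<le> B" by linarith
    then have S: "(\<Sum>j\<in>UNIV. wj j * snd w $ j / 2) \<le> K"
      unfolding K_def by (simp add: sum_subtractf)
    have nn: "0 \<le> wj l * snd w $ l / 2" for l using wpos[of l] z0[of l] by simp
    have "wj j * snd w $ j / 2 \<le> (\<Sum>j\<in>UNIV. wj j * snd w $ j / 2)"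
      by (rule member_le_sum) (simp_all only: nn UNIV_I finite)
    with S have "wj j * snd w $ j / 2 \<le> K" by linarith
    then have "snd w $ j \<le> 2 * K / wj j" using wpos[of j] by (simp add: field_simps)
    also have "\<dots> \<le> \<bar>2 * K / wj j\<bar>" by (rule abs_ge_self)
    also have "\<dots> \<le> (\<Sum>j\<in>UNIV. \<bar>2 * K / wj j\<bar>)" by (rule member_le_sum) auto
    finally have zR: "snd w $ j \<le> R - 1" by (simp add: R_def)
    have "\<bar>fst w $ j\<bar> \<le> 1 + (fst w $ j)\<^sup>2" by (rule abs_le_sq)
    then have "\<bar>fst w $ j\<bar> \<le> 1 + snd w $ j" using wC[rule_format, of j] by linarith
    then show ?thesis using zR z0[of j] by simp
  qed
  have sub: "feasR A a b \<subseteq> cbox (\<chi> _. -R) (\<chi> _. R) \<times> cbox (\<chi> _. -R) (\<chi> _. R)"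
  proof
    fix w assume w: "w \<in> feasR A a b"
    obtain x z where wxz: "w = (x, z)" by fastforce
    show "w \<in> cbox (\<chi> _. -R) (\<chi> _. R) \<times> cbox (\<chi> _. -R) (\<chi> _. R)"
    proof -
      have H: "-R \<le> x$l \<and> x$l \<le> R \<and> -R \<le> z$l \<and> z$l \<le> R" for l
      proof -
        have "0 \<le> z $ l \<and> z $ l \<le> R \<and> \<bar>x $ l\<bar> \<le> R" using bnd[OF w, of l] unfolding wxz by simp
        then show ?thesis by linarith
      qed
      show ?thesis unfolding wxz mem_Times_iff fst_conv snd_conv mem_box_cart
      proof (intro conjI allI)
        fix i
        show "(\<chi> _. - R) $ i \<le> x $ i" using H[of i] by simp
        show "x $ i \<le> (\<chi> _. R) $ i" using H[of i] by simp
        show "(\<chi> _. - R) $ i \<le> z $ i" using H[of i] by simp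
        show "z $ i \<le> (\<chi> _. R) $ i" using H[of i] by simp
      qed
    qed
  qed
  have bdd: "bounded (feasR A a b)"
    by (rule bounded_subset[OF bounded_Times[OF bounded_cbox bounded_cbox] sub])
  have eq: "feasR A a b = (\<Inter>i. {w. gR A a i w \<le> b i}) \<inter> (\<Inter>j. {w. (fst w $ j)\<^sup>2 \<le> snd w $ j})"
    by (auto simp: feasR_eq Cset_def)
  have c1: "closed {w. gR A a i w \<le> b i}" for i
    unfolding gR_def by (intro closed_Collect_le continuous_intros)
  have c2: "closed {w::(real^'n)\<times>(real^'n). (fst w $ j)\<^sup>2 \<le> snd w $ j}" for j
    by (intro closed_Collect_le continuous_intros)
  have "closed (feasR A a b)" unfolding eq by (intro closed_Int closed_INT) (simp_all add: c1 c2)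
  with bdd show ?thesis by (simp add: compact_eq_bounded_closed)
qed



lemma sym_entry: "sym_mat M \<Longrightarrow> M$j$i = M$i$j"
  unfolding sym_mat_def by (metis transpose_def vec_lambda_beta)

lemma diag_sym: "diag_mat P \<Longrightarrow> sym_mat P"
  unfolding sym_mat_def diag_mat_def transpose_def by (auto simp: vec_eq_iff) metis

lemma sym_comb: "sym_mat X \<Longrightarrow> sym_mat P \<Longrightarrow> sym_mat (X + t *\<^sub>R P)"
  unfolding sym_mat_def transpose_def by (auto simp: vec_eq_iff)

lemma slater:
  fixes A :: "'m::finite \<Rightarrow> real^'n::finite^'n"
  assumes diagA: "\<forall>i. diag_mat (A i)"
    and A1_iii: "(top_of_set {p :: (real^'n^'n) \<times> (real^'n). sym_mat (fst p)}) interior_of (feasS A a b) \<noteq> {}"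
  shows "\<exists>wb\<in>Cset. \<forall>i. (\<exists>j. A i$j$j \<noteq> 0 \<or> a i$j \<noteq> 0) \<longrightarrow> gR A a i wb < b i"
proof -
  let ?U = "{p :: (real^'n^'n) \<times> (real^'n). sym_mat (fst p)}"
  obtain p0 where "p0 \<in> (top_of_set ?U) interior_of (feasS A a b)" using A1_iii by blast
  then obtain T where T: "openin (top_of_set ?U) T" "p0 \<in> T" "T \<subseteq> feasS A a b"
    unfolding interior_of_def by blast
  then obtain Ob where Ob: "open Ob" "T = ?U \<inter> Ob" by (auto simp: openin_open)
  then obtain e where e: "e > 0" "ball p0 e \<subseteq> Ob" using T(2) by (meson IntD2 open_contains_ball)
  obtain X0 x0 where p0: "p0 = (X0, x0)" by fastforce
  have p0S: "p0 \<in> feasS A a b" using T by blast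
  then have symX0: "sym_mat X0" and cons: "\<forall>i. frob (A i) X0 + 2 * (a i \<bullet> x0) \<le> b i"
    and psd: "psd_mat (X0 - outer x0 x0)" by (auto simp: feasS_def p0)
  define wb where "wb = (x0, \<chi> j. X0$j$j)"
  have wbC: "wb \<in> Cset"
    unfolding Cset_def wb_def using psd_diag[OF psd] by (auto simp: outer_diag)
  have gwb: "gR A a i wb = frob (A i) X0 + 2 * (a i \<bullet> x0)" for i
    by (simp add: gR_def wb_def frob_diag[OF diagA[rule_format]] inner_sum)
  show ?thesis
  proof (intro bexI[OF _ wbC] allI impI)
    fix i assume nt: "\<exists>j. A i$j$j \<noteq> 0 \<or> a i$j \<noteq> 0"
    show "gR A a i wb < b i"
    proof (rule ccontr)
      assume "\<not> gR A a i wb < b i"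
      then have eqb: "frob (A i) X0 + 2 * (a i \<bullet> x0) = b i" using cons[rule_format, of i] gwb[of i] by linarith
      define q where "q = (\<Sum>j\<in>UNIV. A i$j$j * A i$j$j) + 2 * (\<Sum>j\<in>UNIV. a i$j * a i$j)"
      have qpos: "q > 0"
      proof -
        obtain j where j: "A i$j$j \<noteq> 0 \<or> a i$j \<noteq> 0" using nt by blast
        have s1: "0 \<le> (\<Sum>j\<in>UNIV. A i$j$j * A i$j$j)" and s2: "0 \<le> (\<Sum>j\<in>UNIV. a i$j * a i$j)"
          by (auto intro: sum_nonneg)
        have m1: "A i$j$j * A i$j$j \<le> (\<Sum>j\<in>UNIV. A i$j$j * A i$j$j)"
          by (rule member_le_sum) auto
        have m2: "a i$j * a i$j \<le> (\<Sum>j\<in>UNIV. a i$j * a i$j)"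
          by (rule member_le_sum) auto
        from j have "0 < A i$j$j * A i$j$j \<or> 0 < a i$j * a i$j" by (metis not_real_square_gt_zero)
        then show ?thesis unfolding q_def using s1 s2 m1 m2 by linarith
      qed
      define t where "t = e / (2 * (norm (A i, a i) + 1))"
      have t0: "t > 0" unfolding t_def using e(1) by (intro divide_pos_pos) (auto intro: add_nonneg_pos)
      have tn: "t * norm (A i, a i) < e"
      proof -
        have "t * norm (A i, a i) < t * (2 * (norm (A i, a i) + 1))"
          using t0 by (intro mult_strict_left_mono) (auto intro: add_nonneg_pos)
        also have "\<dots> = e"
        proof -
          have "norm (A i, a i) + 1 > 0" by (simp add: add_nonneg_pos)
          then show ?thesis unfolding t_def by (simp add: field_simps)
        qed
        finally show ?thesis .
      qed
      define p1 where "p1 = (X0 + t *\<^sub>R A i, x0 + t *\<^sub>R a i)"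
      have "p1 - p0 = t *\<^sub>R (A i, a i)" by (simp add: p0 p1_def)
      then have "dist p0 p1 = norm (t *\<^sub>R (A i, a i))"
        by (metis dist_commute dist_norm)
      also have "\<dots> = t * norm (A i, a i)" using t0 by (simp only: norm_scaleR abs_of_pos)
      finally have "p1 \<in> ball p0 e" using tn by simp
      moreover have "p1 \<in> ?U" unfolding p1_def using symX0 diag_sym[OF diagA[rule_format]]
        by (simp add: sym_comb)
      ultimately have "p1 \<in> feasS A a b" using e Ob T by blast
      then have "frob (A i) (X0 + t *\<^sub>R A i) + 2 * (a i \<bullet> (x0 + t *\<^sub>R a i)) \<le> b i"
        by (auto simp: feasS_def p1_def)
      moreover have "frob (A i) (X0 + t *\<^sub>R A i) + 2 * (a i \<bullet> (x0 + t *\<^sub>R a i))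
          = frob (A i) X0 + 2 * (a i \<bullet> x0) + t * q"
        by (simp add: frob_diag[OF diagA[rule_format]] inner_sum q_def algebra_simps sum.distrib sum_distrib_left)
      ultimately show False using eqb qpos t0 by (smt (verit) mult_pos_pos)
    qed
  qed
qed

lemma valR_le_valS:
  fixes A :: "'m::finite \<Rightarrow> real^'n::finite^'n"
  assumes diagD: "diag_mat D" and diagA: "\<forall>i. diag_mat (A i)"
  shows "valR D c A a b \<le> valS D c A a b"
  unfolding valS_def
proof (rule INF_greatest)
  fix p assume p: "p \<in> feasS A a b"
  obtain X x where pX: "p = (X, x)" by fastforce
  have sym: "sym_mat X" and cons: "\<forall>i. frob (A i) X + 2 * (a i \<bullet> x) \<le> b i"
    and psd: "psd_mat (X - outer x x)" using p by (auto simp: feasS_def pX)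
  define w where "w = (x, \<chi> j. X$j$j)"
  have "w \<in> feasR A a b"
    unfolding feasR_eq Cset_def w_def using psd_diag[OF psd] cons
    by (auto simp: outer_diag gR_def frob_diag[OF diagA[rule_format]] inner_sum)
  then have "valR D c A a b \<le> ereal (fR D c w)" unfolding valR_eq by (rule INF_lower)
  also have "fR D c w = frob D (fst p) + 2 * (c \<bullet> snd p)"
    by (simp add: fR_def w_def pX frob_diag[OF diagD] inner_sum)
  finally show "valR D c A a b \<le> ereal (frob D (fst p) + 2 * (c \<bullet> snd p))" .
qed

lemma valS_le_valP:
  fixes A :: "'m::finite \<Rightarrow> real^'n::finite^'n"
  assumes diagD: "diag_mat D" and diagA: "\<forall>i. diag_mat (A i)"
  shows "valS D c A a b \<le> valP D c A a b"
  unfolding valP_def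
proof (rule INF_greatest)
  fix x assume x: "x \<in> feasP A a b"
  have "(outer x x, x) \<in> feasS A a b"
    using x by (simp add: feasS_def feasP_def outer_sym psd_zero frob_diag[OF diagA[rule_format]]
        quad_diag[OF diagA[rule_format]] outer_diag)
  then have "valS D c A a b \<le> ereal (frob D (fst (outer x x, x)) + 2 * (c \<bullet> snd (outer x x, x)))"
    unfolding valS_def by (rule INF_lower)
  also have "frob D (fst (outer x x, x)) + 2 * (c \<bullet> snd (outer x x, x)) = x \<bullet> (D *v x) + 2 * (c \<bullet> x)"
    by (simp add: frob_diag[OF diagD] quad_diag[OF diagD] outer_diag)
  finally show "valS D c A a b \<le> ereal (x \<bullet> (D *v x) + 2 * (c \<bullet> x))" .
qed



lemma main_exact:
  fixes D :: "real^'n::finite^'n" and c :: "real^'n"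
    and A :: "'m::finite \<Rightarrow> real^'n^'n" and a :: "'m \<Rightarrow> real^'n" and b :: "'m \<Rightarrow> real"
    and Ps :: "'n set set"
  assumes diagD: "diag_mat D"
    and diagA: "\<forall>i. diag_mat (A i)"
    and A1_i: "feasP A a b \<noteq> {}"
    and A1_ii: "\<exists>y. (\<forall>i. y i \<ge> 0) \<and> pd_mat (\<Sum>i\<in>UNIV. y i *\<^sub>R A i)"
    and A1_iii: "(top_of_set {p :: (real^'n^'n) \<times> (real^'n). sym_mat (fst p)}) interior_of (feasS A a b) \<noteq> {}"
    and part: "partition_on UNIV Ps"
    and xi: "\<forall>Nh\<in>Ps. \<forall>i. \<exists>\<xi>. \<forall>j\<in>Nh. A i $ j $ j = \<xi>"
    and uniq: "\<forall>Nh\<in>Ps. \<exists>j. unique_argmin D Nh j"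
    and Sk_empty: "\<forall>k\<in>NH D Ps. Sk D c A a k = {}"
  shows "valR D c A a b = valS D c A a b \<and> valS D c A a b = valP D c A a b"
proof -
  obtain x0 where x0: "x0 \<in> feasP A a b" using A1_i by blast
  have gq: "gR A a i (x, \<chi> j. (x$j)\<^sup>2) = x \<bullet> (A i *v x) + 2 * (a i \<bullet> x)" for i x
    by (simp only: quad_diag[OF diagA[rule_format]]) (simp add: gR_def inner_sum)
  have fq: "fR D c (x, \<chi> j. (x$j)\<^sup>2) = x \<bullet> (D *v x) + 2 * (c \<bullet> x)" for x
    by (simp only: quad_diag[OF diagD]) (simp add: fR_def inner_sum)
  have "(x0, \<chi> j. (x0$j)\<^sup>2) \<in> feasR A a b"
    using x0 by (simp add: feasR_eq Cset_def gq feasP_def)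
  then have ne: "feasR A a b \<noteq> {}" by blast
  have cont: "continuous_on (feasR A a b) (fR D c)"
    unfolding fR_def by (intro continuous_intros)
  obtain ws where ws: "ws \<in> feasR A a b" and wsmin: "\<forall>w\<in>feasR A a b. fR D c ws \<le> fR D c w"
    using continuous_attains_inf[OF feasR_compact[OF A1_ii] ne cont] by blast
  define p where "p = fR D c ws"
  have wsC: "ws \<in> Cset" and wsg: "\<forall>i. gR A a i ws \<le> b i" using ws by (auto simp: feasR_eq)
  define nt where "nt i \<longleftrightarrow> (\<exists>j. A i$j$j \<noteq> 0 \<or> a i$j \<noteq> 0)" for i
  have triv: "\<not> nt i \<Longrightarrow> gR A a i w = 0" for i w
    by (simp add: nt_def gR_def)
  have bnn: "\<not> nt i \<Longrightarrow> 0 \<le> b i" for i using wsg[rule_format, of i] triv[of i ws] by simp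
  define h where "h i w = (if nt i then gR A a i w - b i else -1)" for i w
  obtain wb where wb: "wb \<in> Cset" "\<forall>i. nt i \<longrightarrow> gR A a i wb < b i"
    using slater[OF diagA A1_iii] unfolding nt_def by blast
  have "\<exists>\<mu>. (\<forall>i. 0 \<le> \<mu> i) \<and> (\<forall>w\<in>Cset. p \<le> fR D c w + (\<Sum>i\<in>UNIV. \<mu> i * h i w))"
  proof (rule lagrange[where wb = wb])
    show "convex Cset" by (rule convex_Cset)
    show "fR D c (u *\<^sub>R x + v *\<^sub>R y) = u * fR D c x + v * fR D c y" for x y u v by (rule fR_aff)
    show "h i (u *\<^sub>R x + v *\<^sub>R y) = u * h i x + v * h i y" if "u + v = 1" for i x y u v
    proof (cases "nt i")
      case True
      have "u * b i + v * b i = b i" using that by (simp add: distrib_right[symmetric])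
      then show ?thesis using True by (simp add: h_def gR_aff right_diff_distrib)
    next
      case False
      then show ?thesis using that by (simp add: h_def)
    qed
    show "p \<le> fR D c w" if "w \<in> Cset" "\<forall>i. h i w \<le> 0" for w
    proof -
      have "gR A a i w \<le> b i" for i
        using that(2)[rule_format, of i] triv[of i w] bnn[of i] by (auto simp: h_def split: if_splits)
      then have "w \<in> feasR A a b" using that(1) by (simp add: feasR_eq)
      then show ?thesis using wsmin p_def by blast
    qed
    show "wb \<in> Cset" by (rule wb(1))
    show "h i wb < 0" for i using wb(2) by (simp add: h_def)
  qed
  then obtain \<mu>0 where mu0: "\<forall>i. 0 \<le> \<mu>0 i" and lag0: "\<forall>w\<in>Cset. p \<le> fR D c w + (\<Sum>i\<in>UNIV. \<mu>0 i * h i w)"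
    by blast
  define \<mu> where "\<mu> i = (if nt i then \<mu>0 i else 0)" for i
  have mu: "0 \<le> \<mu> i" for i using mu0 by (simp add: \<mu>_def)
  define L where "L w = fR D c w + (\<Sum>i\<in>UNIV. \<mu> i * (gR A a i w - b i))" for w
  have Lge: "p \<le> L w" if "w \<in> Cset" for w
  proof -
    have "(\<Sum>i\<in>UNIV. \<mu>0 i * h i w) \<le> (\<Sum>i\<in>UNIV. \<mu> i * (gR A a i w - b i))"
      using mu0 by (intro sum_mono) (auto simp: \<mu>_def h_def)
    then show ?thesis using lag0 that unfolding L_def by fastforce
  qed
  have Lle: "L ws \<le> p"
  proof -
    have "(\<Sum>i\<in>UNIV. \<mu> i * (gR A a i ws - b i)) \<le> 0"
      using mu wsg by (intro sum_nonpos mult_nonneg_nonpos) auto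
    then show ?thesis unfolding L_def p_def by simp
  qed
  define d where "d j = D$j$j + (\<Sum>i\<in>UNIV. \<mu> i * A i $ j $ j)" for j
  define e where "e j = c$j + (\<Sum>i\<in>UNIV. \<mu> i * a i $ j)" for j
  have Lsep: "L w = (\<Sum>j\<in>UNIV. d j * snd w $ j + 2 * (e j * fst w $ j)) - (\<Sum>i\<in>UNIV. \<mu> i * b i)" for w
  proof -
    have "(\<Sum>i\<in>UNIV. \<mu> i * (gR A a i w - b i)) = (\<Sum>i\<in>UNIV. \<mu> i * gR A a i w) - (\<Sum>i\<in>UNIV. \<mu> i * b i)"
      by (simp add: right_diff_distrib sum_subtractf)
    moreover have "(\<Sum>i\<in>UNIV. \<mu> i * gR A a i w)
        = (\<Sum>j\<in>UNIV. (\<Sum>i\<in>UNIV. \<mu> i * A i $ j $ j) * snd w $ j + 2 * ((\<Sum>i\<in>UNIV. \<mu> i * a i $ j) * fst w $ j))"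
      unfolding gR_def by (rule swap_form)
    ultimately show ?thesis
      unfolding L_def fR_def d_def e_def
      by (simp add: algebra_simps sum.distrib sum_distrib_left)
  qed
  obtain xs zs where wsxz: "ws = (xs, zs)" by fastforce
  have inC: "\<forall>j. (xs$j)\<^sup>2 \<le> zs$j" using wsC by (simp add: Cset_def wsxz)
  have minPhi: "(\<Sum>j\<in>UNIV. d j * zs $ j + 2 * (e j * xs $ j)) \<le> (\<Sum>j\<in>UNIV. d j * z $ j + 2 * (e j * x $ j))"
    if "\<forall>j. (x$j)\<^sup>2 \<le> z$j" for x z
  proof -
    have "(x, z) \<in> Cset" using that by (simp add: Cset_def)
    then have "L ws \<le> L (x, z)" using Lge Lle by fastforce
    then show ?thesis unfolding Lsep wsxz by simp
  qed
  have dnn: "0 \<le> d j" for j by (rule sep_min(1)[OF inC minPhi])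
  have slack: "d k = 0 \<and> e k = 0" if "(xs$k)\<^sup>2 < zs$k" for k
    by (rule sep_min(2)[OF inC minPhi that])
  have tight: "(xs$j)\<^sup>2 = zs$j" for j
  proof (rule ccontr)
    assume "(xs$j)\<^sup>2 \<noteq> zs$j"
    then have lt: "(xs$j)\<^sup>2 < zs$j" using inC[rule_format, of j] by linarith
    then have dj: "d j = 0" and ej: "e j = 0" using slack by auto
    obtain Nh where Nh: "Nh \<in> Ps" "j \<in> Nh" using part unfolding partition_on_def by blast
    obtain jh where jh: "unique_argmin D Nh jh" using uniq Nh by blast
    show False
    proof (cases "j = jh")
      case True
      then have "j \<in> NH D Ps" using jh Nh unfolding NH_def by blast
      moreover have "\<mu> \<in> Sk D c A a j"
        unfolding Sk_def using dj ej dnn mu by (simp add: d_def e_def)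
      ultimately show False using Sk_empty by blast
    next
      case False
      have jhN: "jh \<in> Nh" and less: "D$jh$jh < D$j$j" using jh Nh False unfolding unique_argmin_def by auto
      have "\<forall>i. A i $ jh $ jh = A i $ j $ j"
      proof
        fix i
        obtain \<xi> where "\<forall>l\<in>Nh. A i $ l $ l = \<xi>" using xi Nh by blast
        then show "A i $ jh $ jh = A i $ j $ j" using jhN Nh by simp
      qed
      then have "d jh < d j" using less by (simp add: d_def)
      then show False using dj dnn[of jh] by simp
    qed
  qed
  have wseq: "ws = (xs, \<chi> j. (xs$j)\<^sup>2)" using tight by (simp add: wsxz vec_eq_iff)
  have xsP: "xs \<in> feasP A a b" using wsg by (simp add: feasP_def wseq gq[symmetric])
  have "valP D c A a b \<le> ereal (xs \<bullet> (D *v xs) + 2 * (c \<bullet> xs))"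
    unfolding valP_def using xsP by (rule INF_lower)
  also have "xs \<bullet> (D *v xs) + 2 * (c \<bullet> xs) = fR D c ws" by (simp add: wseq fq)
  also have "ereal (fR D c ws) \<le> valR D c A a b"
    unfolding valR_eq using wsmin by (intro INF_greatest) simp
  finally have PR: "valP D c A a b \<le> valR D c A a b" .
  have RS: "valR D c A a b \<le> valS D c A a b" by (rule valR_le_valS[OF diagD diagA])
  have SP: "valS D c A a b \<le> valP D c A a b" by (rule valS_le_valP[OF diagD diagA])
  show ?thesis using PR RS SP by (meson order_antisym order_trans)
qed

theorem theorem3:
  fixes D :: "real^'n::finite^'n" and c :: "real^'n"
    and A :: "'m::finite \<Rightarrow> real^'n^'n" and a :: "'m \<Rightarrow> real^'n" and b :: "'m \<Rightarrow> real"
    and Ps :: "'n set set"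
  assumes diagD: "diag_mat D"
    and diagA: "\<forall>i. diag_mat (A i)"
    \<comment> \<open>Assumption 1\<close>
    and A1_i: "feasP A a b \<noteq> {}"
    and A1_ii: "\<exists>y. (\<forall>i. y i \<ge> 0) \<and> pd_mat (\<Sum>i\<in>UNIV. y i *\<^sub>R A i)"
    and A1_iii: "(top_of_set {p :: (real^'n^'n) \<times> (real^'n). sym_mat (fst p)}) interior_of (feasS A a b) \<noteq> {}"
    \<comment> \<open>partition setting\<close>
    and part: "partition_on UNIV Ps"
    and xi: "\<forall>Nh\<in>Ps. \<forall>i. \<exists>\<xi>. \<forall>j\<in>Nh. A i $ j $ j = \<xi>"
    and uniq: "\<forall>Nh\<in>Ps. \<exists>j. unique_argmin D Nh j"
  shows "((\<forall>k\<in>NH D Ps. Sk D c A a k = {}) \<longrightarrow>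
            valR D c A a b = valS D c A a b \<and> valS D c A a b = valP D c A a b)
       \<and> ((\<forall>j\<in>NH D Ps. (c $ j > 0 \<and> (\<forall>i. a i $ j > 0)) \<or> (c $ j < 0 \<and> (\<forall>i. a i $ j < 0))) \<longrightarrow>
            valR D c A a b = valS D c A a b \<and> valS D c A a b = valP D c A a b)"
proof (rule conjI; rule impI)
  assume "\<forall>k\<in>NH D Ps. Sk D c A a k = {}"
  then show "valR D c A a b = valS D c A a b \<and> valS D c A a b = valP D c A a b"
    using main_exact[OF assms] by blast
next
  assume H: "\<forall>j\<in>NH D Ps. (c $ j > 0 \<and> (\<forall>i. a i $ j > 0)) \<or> (c $ j < 0 \<and> (\<forall>i. a i $ j < 0))"
  have "\<forall>k\<in>NH D Ps. Sk D c A a k = {}"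
  proof (intro ballI equals0I)
    fix k \<mu> assume k: "k \<in> NH D Ps" and m: "\<mu> \<in> Sk D c A a k"
    then have ck: "c $ k + (\<Sum>i\<in>UNIV. \<mu> i * a i $ k) = 0" and mu: "\<forall>i. \<mu> i \<ge> 0"
      unfolding Sk_def by auto
    from H k have "(c $ k > 0 \<and> (\<forall>i. a i $ k > 0)) \<or> (c $ k < 0 \<and> (\<forall>i. a i $ k < 0))" by blast
    then show False
    proof
      assume p: "c $ k > 0 \<and> (\<forall>i. a i $ k > 0)"
      have "0 \<le> (\<Sum>i\<in>UNIV. \<mu> i * a i $ k)" using mu p by (intro sum_nonneg) (simp add: less_imp_le)
      then show False using ck p by linarith
    next
      assume n: "c $ k < 0 \<and> (\<forall>i. a i $ k < 0)"
      have "(\<Sum>i\<in>UNIV. \<mu> i * a i $ k) \<le> 0" using mu n by (intro sum_nonpos mult_nonneg_nonpos) (auto simp: less_imp_le)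
      then show False using ck n by linarith
    qed
  qed
  then show "valR D c A a b = valS D c A a b \<and> valS D c A a b = valP D c A a b"
    using main_exact[OF assms] by blast
qed

end
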